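(* Let $C:2^M\to\mathbb{R}_{\ge0}$ be a monotone normalized cost function and $P_C$ its potential function. If $C$ is XOS (in particular, if $C$ is submodular), then $P_C(\vec S)\ge C(\vec S)$ for every allocation $\vec S$. If $C$ is subadditive, then $P_C(\vec S)\ge \frac{C(\vec S)}{2}$ for every allocation $\vec S$.
   Context: Setting. $N=\{1,\dots,n\}$ is a set of players and $M_1,\dots,M_n$ are pairwise disjoint finite sets; $M=\bigcup_i M_i$. An allocation is a vector $\vec S=(S_1,\dots,S_n)$ with $S_i\subseteq M_i$; since the $M_i$ are disjoint, allocations are identified with subsets $\bigcup_i S_i$ of $M$, so a function on allocations is a set function on $2^M$. The potential function of a cost function $C$ is $P_C(\vec S)=\sum_{\emptyset\neq I\subseteq N}\frac{C(\bigcup_{i\in I}S_i)}{|I|\binom{n}{|I|}}$. A set function $f$ on $2^M$ is XOS if there are additive functions $a_1,\dots,a_t$ (i.e. $a_r(S)=\sum_{j\in S}a_r(\{j\})$) with $f(S)=\max_r a_r(S)$ for all $S$; subadditive if $f(S)+f(T)\ge f(S\cup T)$ for all $S,T$. *)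

theory Defs
  imports Complex_Main
begin

text \<open>Players are \<open>{1..n}\<close>; player i owns the item set \<open>Mi i\<close>;
  the ground set is \<open>M = (\<Union>i\<in>{1..n}. Mi i)\<close>.
  Allocations \<open>S\<close> (with \<open>S i \<subseteq> Mi i\<close>) are identified with \<open>\<Union>i\<in>{1..n}. S i\<close>.\<close>

definition ground :: "nat \<Rightarrow> (nat \<Rightarrow> 'a set) \<Rightarrow> 'a set" where
  "ground n Mi = (\<Union>i\<in>{1..n}. Mi i)"

definition is_allocation :: "nat \<Rightarrow> (nat \<Rightarrow> 'a set) \<Rightarrow> (nat \<Rightarrow> 'a set) \<Rightarrow> bool" where
  "is_allocation n Mi S \<longleftrightarrow> (\<forall>i\<in>{1..n}. S i \<subseteq> Mi i)"

definition alloc_set :: "nat \<Rightarrow> (nat \<Rightarrow> 'a set) \<Rightarrow> 'a set" where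
  "alloc_set n S = (\<Union>i\<in>{1..n}. S i)"

definition potential :: "nat \<Rightarrow> ('a set \<Rightarrow> real) \<Rightarrow> (nat \<Rightarrow> 'a set) \<Rightarrow> real" where
  "potential n C S =
     (\<Sum>I\<in>{I. I \<subseteq> {1..n} \<and> I \<noteq> {}}.
        C (\<Union>i\<in>I. S i) / (real (card I) * real (n choose card I)))"

definition monotone_cost :: "'a set \<Rightarrow> ('a set \<Rightarrow> real) \<Rightarrow> bool" where
  "monotone_cost M C \<longleftrightarrow> (\<forall>S T. S \<subseteq> T \<and> T \<subseteq> M \<longrightarrow> C S \<le> C T)"

definition normalized_cost :: "('a set \<Rightarrow> real) \<Rightarrow> bool" where
  "normalized_cost C \<longleftrightarrow> C {} = 0"

definition nonneg_cost :: "'a set \<Rightarrow> ('a set \<Rightarrow> real) \<Rightarrow> bool" where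
  "nonneg_cost M C \<longleftrightarrow> (\<forall>S \<subseteq> M. C S \<ge> 0)"

text \<open>XOS: maximum of finitely many (at least one) additive functions; an additive
  function on \<open>2^M\<close> is given by its values on singletons.\<close>
definition XOS :: "'a set \<Rightarrow> ('a set \<Rightarrow> real) \<Rightarrow> bool" where
  "XOS M C \<longleftrightarrow> (\<exists>A :: ('a \<Rightarrow> real) set. finite A \<and> A \<noteq> {} \<and>
      (\<forall>S \<subseteq> M. C S = Max ((\<lambda>a. \<Sum>j\<in>S. a j) ` A)))"

definition subadditive :: "'a set \<Rightarrow> ('a set \<Rightarrow> real) \<Rightarrow> bool" where
  "subadditive M C \<longleftrightarrow> (\<forall>S T. S \<subseteq> M \<and> T \<subseteq> M \<longrightarrow> C S + C T \<ge> C (S \<union> T))"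

end

theory Submission imports Defs begin

lemma sum_pow_card:
  assumes "finite A"
  shows "(\<Sum>I\<in>Pow A. h (card I)) = (\<Sum>k\<le>card A. real (card A choose k) * h k)"
proof -
  have "(\<Sum>I\<in>Pow A. h (card I)) = (\<Sum>k\<le>card A. \<Sum>I\<in>{I. I \<in> Pow A \<and> card I = k}. h (card I))"
    by (rule sum.group[symmetric]) (use assms in \<open>auto intro: card_mono\<close>)
  also have "\<dots> = (\<Sum>k\<le>card A. \<Sum>I\<in>{I. I \<in> Pow A \<and> card I = k}. h k)"
    by (intro sum.cong) auto
  also have "\<dots> = (\<Sum>k\<le>card A. real (card A choose k) * h k)"
  proof (intro sum.cong refl)
    fix k
    have "card {I. I \<in> Pow A \<and> card I = k} = card A choose k"
      using n_subsets[OF assms, of k] by simp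
    then show "(\<Sum>I\<in>{I. I \<in> Pow A \<and> card I = k}. h k) = real (card A choose k) * h k"
      by simp
  qed
  finally show ?thesis .
qed

lemma count_w:
  assumes "finite N" "card N = n" "i \<in> N"
  shows "(\<Sum>I\<in>{I. I \<in> Pow N \<and> i \<in> I}. 1 / (real (card I) * real (n choose card I))) = 1"
proof -
  obtain m where n: "n = Suc m" using assms by (cases n) auto
  have fin': "finite (N - {i})" using assms by auto
  have cm: "card (N - {i}) = m" using assms n by simp
  have eq: "{I. I \<in> Pow N \<and> i \<in> I} = insert i ` Pow (N - {i})"
  proof
    show "{I. I \<in> Pow N \<and> i \<in> I} \<subseteq> insert i ` Pow (N - {i})"
    proof
      fix I assume "I \<in> {I. I \<in> Pow N \<and> i \<in> I}"
      then have "I = insert i (I - {i})" "I - {i} \<in> Pow (N - {i})" by auto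
      then show "I \<in> insert i ` Pow (N - {i})" by blast
    qed
  qed (use assms in auto)
  have inj: "inj_on (insert i) (Pow (N - {i}))"
  proof (rule inj_onI)
    fix A B assume h: "A \<in> Pow (N - {i})" "B \<in> Pow (N - {i})" "insert i A = insert i B"
    then have "i \<notin> A" "i \<notin> B" by auto
    then show "A = B" using h(3) by (metis Diff_insert_absorb)
  qed
  have "(\<Sum>I\<in>{I. I \<in> Pow N \<and> i \<in> I}. 1 / (real (card I) * real (n choose card I)))
      = (\<Sum>J\<in>Pow (N - {i}). 1 / (real (card (insert i J)) * real (n choose card (insert i J))))"
    unfolding eq by (subst sum.reindex[OF inj]) simp
  also have "\<dots> = (\<Sum>J\<in>Pow (N - {i}). 1 / (real (Suc (card J)) * real (n choose Suc (card J))))"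
  proof (intro sum.cong refl)
    fix J assume "J \<in> Pow (N - {i})"
    then have "finite J" "i \<notin> J" using fin' finite_subset by auto
    then show "1 / (real (card (insert i J)) * real (n choose card (insert i J))) =
       1 / (real (Suc (card J)) * real (n choose Suc (card J)))" by simp
  qed
  also have "\<dots> = (\<Sum>k\<le>m. real (m choose k) * (1 / (real (Suc k) * real (n choose Suc k))))"
    using sum_pow_card[OF fin', of "\<lambda>k. 1 / (real (Suc k) * real (n choose Suc k))"] cm by simp
  also have "\<dots> = (\<Sum>k\<le>m. 1 / real n)"
  proof (intro sum.cong refl)
    fix k assume "k \<in> {..m}"
    have e: "real (Suc m) * real (m choose k) = real (Suc m choose Suc k) * real (Suc k)"
      using Suc_times_binomial_eq[of m k] by (metis of_nat_mult)
    have "(Suc m choose Suc k) > 0" using \<open>k \<in> {..m}\<close> by simp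
    then have pos: "real (Suc m choose Suc k) * real (Suc k) \<noteq> 0"
      by (metis mult_eq_0_iff nat.distinct(1) of_nat_eq_0_iff less_irrefl)
    have "real (m choose k) * (1 / (real (Suc k) * real (Suc m choose Suc k)))
        = (real (Suc m) * real (m choose k)) / (real (Suc m) * (real (Suc m choose Suc k) * real (Suc k)))"
      by (simp add: mult.commute)
    also have "\<dots> = 1 / real (Suc m)" unfolding e using pos by (simp del: of_nat_Suc)
    finally show "real (m choose k) * (1 / (real (Suc k) * real (n choose Suc k))) = 1 / real n"
      unfolding n .
  qed
  also have "\<dots> = 1" using n by simp
  finally show ?thesis .
qed


lemma pot_index: "{I. I \<subseteq> {1..n} \<and> I \<noteq> {}} = Pow {1..n::nat} - {{}}" by auto

lemma xos_part:
  fixes n :: nat and Mi :: "nat \<Rightarrow> 'a set" and C :: "'a set \<Rightarrow> real"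
  assumes fin: "\<forall>i\<in>{1..n}. finite (Mi i)"
    and disj: "\<forall>i\<in>{1..n}. \<forall>j\<in>{1..n}. i \<noteq> j \<longrightarrow> Mi i \<inter> Mi j = {}"
    and xos: "XOS (ground n Mi) C"
    and al: "is_allocation n Mi S"
  shows "potential n C S \<ge> C (alloc_set n S)"
proof -
  define N where "N = {1..n}"
  have finN: "finite N" and cardN: "card N = n" unfolding N_def by auto
  have finS: "\<forall>i\<in>N. finite (S i)" using fin al unfolding is_allocation_def N_def
    by (meson finite_subset)
  have disjS: "\<forall>i\<in>N. \<forall>j\<in>N. i \<noteq> j \<longrightarrow> S i \<inter> S j = {}" using disj al
    unfolding is_allocation_def N_def by blast
  have sub: "\<And>I. I \<subseteq> N \<Longrightarrow> (\<Union>i\<in>I. S i) \<subseteq> ground n Mi"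
    using al unfolding is_allocation_def ground_def N_def by blast
  obtain A :: "('a \<Rightarrow> real) set" where A: "finite A" "A \<noteq> {}"
    "\<forall>T \<subseteq> ground n Mi. C T = Max ((\<lambda>a. \<Sum>j\<in>T. a j) ` A)"
    using xos unfolding XOS_def by blast
  have allocN: "alloc_set n S = (\<Union>i\<in>N. S i)" unfolding alloc_set_def N_def ..
  have "Max ((\<lambda>a. \<Sum>j\<in>alloc_set n S. a j) ` A) \<in> (\<lambda>a. \<Sum>j\<in>alloc_set n S. a j) ` A"
    using A by (intro Max_in) auto
  then obtain a where aA: "a \<in> A" and aeq: "C (alloc_set n S) = (\<Sum>j\<in>alloc_set n S. a j)"
    using A(3) sub[of N] allocN by auto
  define x where "x i = (\<Sum>j\<in>S i. a j)" for i
  have usum: "(\<Sum>j\<in>(\<Union>i\<in>I. S i). a j) = (\<Sum>i\<in>I. x i)" if "I \<subseteq> N" for I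
  proof -
    have "\<forall>i\<in>I. \<forall>j\<in>I. i \<noteq> j \<longrightarrow> S i \<inter> S j = {}" using that disjS by blast
    moreover have "\<forall>i\<in>I. finite (S i)" using that finS by blast
    ultimately show ?thesis unfolding x_def
      using finite_subset[OF that finN] by (intro sum.UNION_disjoint) auto
  qed
  have Cge: "C (\<Union>i\<in>I. S i) \<ge> (\<Sum>i\<in>I. x i)" if "I \<subseteq> N" for I
  proof -
    have "C (\<Union>i\<in>I. S i) = Max ((\<lambda>a. \<Sum>j\<in>(\<Union>i\<in>I. S i). a j) ` A)"
      using A(3) sub[OF that] by blast
    also have "\<dots> \<ge> (\<Sum>j\<in>(\<Union>i\<in>I. S i). a j)" using A aA by (intro Max_ge) auto
    finally show ?thesis using usum[OF that] by simp
  qed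
  define w where "w I = 1 / (real (card I) * real (n choose card I))" for I :: "nat set"
  have w0: "w I \<ge> 0" for I unfolding w_def by simp
  have "potential n C S = (\<Sum>I\<in>Pow N - {{}}. C (\<Union>i\<in>I. S i) * w I)"
    unfolding potential_def pot_index N_def w_def by simp
  also have "\<dots> \<ge> (\<Sum>I\<in>Pow N - {{}}. (\<Sum>i\<in>I. x i) * w I)"
    by (intro sum_mono mult_right_mono Cge w0) auto
  finally have p1: "potential n C S \<ge> (\<Sum>I\<in>Pow N - {{}}. (\<Sum>i\<in>I. x i) * w I)" .
  have "(\<Sum>I\<in>Pow N - {{}}. (\<Sum>i\<in>I. x i) * w I) = (\<Sum>I\<in>Pow N. (\<Sum>i\<in>I. x i) * w I)"
    using finN by (subst sum_diff1) auto
  also have "\<dots> = (\<Sum>I\<in>Pow N. \<Sum>i\<in>{i. i \<in> N \<and> i \<in> I}. x i * w I)"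
  proof (intro sum.cong refl)
    fix I assume "I \<in> Pow N"
    then have "{i. i \<in> N \<and> i \<in> I} = I" by auto
    then show "(\<Sum>i\<in>I. x i) * w I = (\<Sum>i\<in>{i. i \<in> N \<and> i \<in> I}. x i * w I)"
      by (simp add: sum_distrib_right)
  qed
  also have "\<dots> = (\<Sum>i\<in>N. \<Sum>I\<in>{I. I \<in> Pow N \<and> i \<in> I}. x i * w I)"
    using finN by (intro sum.swap_restrict) auto
  also have "\<dots> = (\<Sum>i\<in>N. x i)"
  proof (intro sum.cong refl)
    fix i assume "i \<in> N"
    have "(\<Sum>I\<in>{I. I \<in> Pow N \<and> i \<in> I}. x i * w I) = x i * (\<Sum>I\<in>{I. I \<in> Pow N \<and> i \<in> I}. w I)"
      by (simp add: sum_distrib_left)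
    also have "\<dots> = x i" using count_w[OF finN cardN \<open>i \<in> N\<close>] unfolding w_def by simp
    finally show "(\<Sum>I\<in>{I. I \<in> Pow N \<and> i \<in> I}. x i * w I) = x i" .
  qed
  also have "\<dots> = C (alloc_set n S)" using aeq allocN usum[of N] by simp
  finally show ?thesis using p1 by simp
qed

lemma subadd_part:
  fixes n :: nat and Mi :: "nat \<Rightarrow> 'a set" and C :: "'a set \<Rightarrow> real"
  assumes nonneg: "nonneg_cost (ground n Mi) C"
    and norm: "normalized_cost C"
    and sa: "subadditive (ground n Mi) C"
    and al: "is_allocation n Mi S"
  shows "potential n C S \<ge> C (alloc_set n S) / 2"
proof -
  define N where "N = {1..n}"
  have finN: "finite N" and cardN: "card N = n" unfolding N_def by auto
  have sub: "\<And>I. I \<subseteq> N \<Longrightarrow> (\<Union>i\<in>I. S i) \<subseteq> ground n Mi"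
    using al unfolding is_allocation_def ground_def N_def by blast
  have Cnn: "\<And>I. I \<subseteq> N \<Longrightarrow> C (\<Union>i\<in>I. S i) \<ge> 0"
    using nonneg sub unfolding nonneg_cost_def by blast
  have allocN: "alloc_set n S = (\<Union>i\<in>N. S i)" unfolding alloc_set_def N_def ..
  have C0: "C {} = 0" using norm unfolding normalized_cost_def .
  have cardle: "I \<subseteq> N \<Longrightarrow> card I \<le> n" for I using cardN finN card_mono by blast
  have bpos: "I \<subseteq> N \<Longrightarrow> real (n choose card I) > 0" for I using cardle by simp
  have pot: "potential n C S = (\<Sum>I\<in>Pow N - {{}}. C (\<Union>i\<in>I. S i) / (real (card I) * real (n choose card I)))"
    unfolding potential_def pot_index N_def by simp
  show ?thesis
  proof (cases "n = 0")
    case True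
    then have "alloc_set n S = {}" unfolding alloc_set_def by simp
    moreover have "potential n C S = 0" using True unfolding potential_def by simp
    ultimately show ?thesis using C0 by simp
  next
    case False
    define g where "g I = C (\<Union>i\<in>I. S i) / real (n choose card I)" for I
    have "potential n C S \<ge> (\<Sum>I\<in>Pow N - {{}}. g I / real n)"
      unfolding pot
    proof (intro sum_mono)
      fix I assume I: "I \<in> Pow N - {{}}"
      then have IN: "I \<subseteq> N" and ne: "I \<noteq> {}" by auto
      have c1: "card I \<ge> 1" using ne finite_subset[OF IN finN] by (simp add: Suc_le_eq card_gt_0_iff)
      have "real (card I) * real (n choose card I) \<le> real n * real (n choose card I)"
        using cardle[OF IN] by (intro mult_right_mono) auto
      moreover have "0 < real (card I) * real (n choose card I)" using c1 bpos[OF IN] by simp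
      ultimately have "C (\<Union>i\<in>I. S i) / (real n * real (n choose card I))
          \<le> C (\<Union>i\<in>I. S i) / (real (card I) * real (n choose card I))"
        using Cnn[OF IN] by (intro divide_left_mono) auto
      then show "g I / real n \<le> C (\<Union>i\<in>I. S i) / (real (card I) * real (n choose card I))"
        unfolding g_def by (simp add: mult.commute)
    qed
    also have "(\<Sum>I\<in>Pow N - {{}}. g I / real n) = (\<Sum>I\<in>Pow N. g I) / real n"
      using finN C0 by (subst sum_diff1) (auto simp: g_def sum_divide_distrib)
    finally have p1: "potential n C S \<ge> (\<Sum>I\<in>Pow N. g I) / real n" .
    have bij: "bij_betw (\<lambda>I. N - I) (Pow N) (Pow N)"
      by (rule bij_betw_byWitness[where f' = "\<lambda>I. N - I"]) auto
    have sw: "(\<Sum>I\<in>Pow N. g (N - I)) = (\<Sum>I\<in>Pow N. g I)"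
      using sum.reindex_bij_betw[OF bij, of g] .
    have "2 * (\<Sum>I\<in>Pow N. g I) = (\<Sum>I\<in>Pow N. g I + g (N - I))"
      using sw by (simp add: sum.distrib)
    also have "\<dots> \<ge> (\<Sum>I\<in>Pow N. C (alloc_set n S) / real (n choose card I))"
    proof (intro sum_mono)
      fix I assume "I \<in> Pow N"
      then have IN: "I \<subseteq> N" by auto
      have fI: "finite I" using finite_subset[OF IN finN] .
      have "card (N - I) = n - card I" using IN fI cardN by (simp add: card_Diff_subset)
      then have bc: "n choose card (N - I) = n choose card I"
        using binomial_symmetric[OF cardle[OF IN]] by simp
      have un: "(\<Union>i\<in>I. S i) \<union> (\<Union>i\<in>N - I. S i) = alloc_set n S"
        using IN allocN by blast
      have "C (alloc_set n S) \<le> C (\<Union>i\<in>I. S i) + C (\<Union>i\<in>N - I. S i)"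
        using sa sub[OF IN] sub[of "N - I"] un unfolding subadditive_def by (metis Diff_subset)
      then show "C (alloc_set n S) / real (n choose card I) \<le> g I + g (N - I)"
        unfolding g_def bc using bpos[OF IN] by (simp add: add_divide_distrib[symmetric] divide_right_mono)
    qed
    also have "(\<Sum>I\<in>Pow N. C (alloc_set n S) / real (n choose card I))
        = (\<Sum>k\<le>n. real (n choose k) * (C (alloc_set n S) / real (n choose k)))"
      using sum_pow_card[OF finN, of "\<lambda>k. C (alloc_set n S) / real (n choose k)"] cardN by simp
    also have "\<dots> = (\<Sum>k\<le>n. C (alloc_set n S))" by (intro sum.cong refl) auto
    also have "\<dots> = real (n + 1) * C (alloc_set n S)" by simp
    finally have s2: "real (n + 1) * C (alloc_set n S) \<le> 2 * (\<Sum>I\<in>Pow N. g I)" .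
    have Ca: "C (alloc_set n S) \<ge> 0" using Cnn[of N] allocN by simp
    have np: "real n > 0" using False by simp
    have "C (alloc_set n S) / 2 \<le> real (n + 1) * C (alloc_set n S) / (2 * real n)"
      using Ca np by (simp add: field_simps)
    also have "\<dots> = (real (n + 1) * C (alloc_set n S) / 2) / real n" by simp
    also have "\<dots> \<le> (\<Sum>I\<in>Pow N. g I) / real n"
      using s2 np by (intro divide_right_mono) auto
    finally show ?thesis using p1 by linarith
  qed
qed

theorem proposition3p3:
  fixes n :: nat and Mi :: "nat \<Rightarrow> 'a set" and C :: "'a set \<Rightarrow> real"
  assumes fin: "\<forall>i\<in>{1..n}. finite (Mi i)"
    and disj: "\<forall>i\<in>{1..n}. \<forall>j\<in>{1..n}. i \<noteq> j \<longrightarrow> Mi i \<inter> Mi j = {}"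
    and nonneg: "nonneg_cost (ground n Mi) C"
    and mono: "monotone_cost (ground n Mi) C"
    and norm: "normalized_cost C"
  shows "(XOS (ground n Mi) C \<longrightarrow>
            (\<forall>S. is_allocation n Mi S \<longrightarrow> potential n C S \<ge> C (alloc_set n S)))
       \<and> (subadditive (ground n Mi) C \<longrightarrow>
            (\<forall>S. is_allocation n Mi S \<longrightarrow> potential n C S \<ge> C (alloc_set n S) / 2))"
  using xos_part[OF fin disj] subadd_part[OF nonneg norm] by blast

end
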